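(* Let $(L,M,N,P)$ be a crossed square with maps $\lambda,\lambda',\mu,\nu$ and function $h$. Let $L\rtimes N$ and $M\rtimes P$ be the semidirect products (with $N$ acting on $L$ via $\nu$), i.e. $(l,n)+(l',n')=(l+n\cdot l',n+n')$ and $(m,p)+(m',p')=(m+p\cdot m',p+p')$. Let $M\rtimes P$ act on $L\rtimes N$ by $(m,p)\cdot(l,n)=(m\cdot(p\cdot l)+h(m,p\cdot n),\ p\cdot n)$. Then $C_1=(L\rtimes N,M\rtimes P,\lambda\times\nu)$ and $C_0=(N,P,\nu)$ are crossed modules, and together with $s_A(l,n)=n$, $s_B(m,p)=p$, $t_A(l,n)=\lambda'(l)+n$, $t_B(m,p)=\mu(m)+p$, $\varepsilon_A(n)=(0,n)$, $\varepsilon_B(p)=(0,p)$ and compositions $(l',\lambda'(l)+n)\circ(l,n)=(l'+l,n)$, $(m',\mu(m)+p)\circ(m,p)=(m'+m,p)$, they form an internal category in $\mathsf{XMod}$.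
   Context: Groups are written additively. A crossed module $(A,B,\alpha)$: groups $A,B$, a left action of $B$ on $A$ by automorphisms, a homomorphism $\alpha:A\to B$ with $\alpha(b\cdot a)=b+\alpha(a)-b$ and $\alpha(a)\cdot a'=a+a'-a$. Morphisms $\langle f_A,f_B\rangle$ are pairs of homomorphisms with $f_B\alpha=\alpha'f_A$, $f_A(b\cdot a)=f_B(b)\cdot f_A(a)$. An internal category in $\mathsf{XMod}$ consists of crossed modules $C_1=(A_1,B_1,\alpha_1)$, $C_0=(A_0,B_0,\alpha_0)$ and crossed module morphisms $s=\langle s_A,s_B\rangle, t=\langle t_A,t_B\rangle:C_1\to C_0$, $\varepsilon=\langle\varepsilon_A,\varepsilon_B\rangle:C_0\to C_1$, $m=\langle m_A,m_B\rangle:C_1\,{}_s\!\times_t C_1\to C_1$ (pullback computed componentwise, pairs $(x,y)$ with $s(x)=t(y)$, componentwise action; $m(x,y)$ written $x\circ y$) satisfying $s\varepsilon=t\varepsilon=1$, $sm=s\pi_2$, $tm=t\pi_1$, associativity and unit laws $m(\varepsilon s,1)=m(1,\varepsilon t)=1$. A crossed square: homomorphisms $\lambda:L\to M$, $\lambda':L\to N$, $\mu:M\to P$, $\nu:N\to P$ with $\nu\lambda'=\mu\lambda$, left actions of $P$ on $L,M,N$ (inducing actions of $M$ on $L,N$ via $\mu$ and of $N$ on $L,M$ via $\nu$, e.g. $m\cdot l=\mu(m)\cdot l$), and $h:M\times N\to L$, such that (i) $\lambda,\lambda'$ are $P$-equivariant and $\mu$, $\nu$, $\mu\lambda$ are crossed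 modules; (ii) $\lambda h(m,n)=m+n\cdot(-m)$, $\lambda'h(m,n)=m\cdot n-n$; (iii) $h(\lambda(l),n)=l+n\cdot(-l)$, $h(m,\lambda'(l))=m\cdot l-l$; (iv) $h(m+m',n)=m\cdot h(m',n)+h(m,n)$, $h(m,n+n')=h(m,n)+n\cdot h(m,n')$; (v) $h(p\cdot m,p\cdot n)=p\cdot h(m,n)$. *)

theory Defs
  imports "HOL-Algebra.Group"
begin

(* Groups are HOL-Algebra groups (the paper's additive notation x + y is written
  x <otimes> y, 0 is <one>, -x is inv x). *)

definition action_by_automorphisms ::
  "('a, 'c) monoid_scheme \<Rightarrow> ('b, 'd) monoid_scheme \<Rightarrow> ('b \<Rightarrow> 'a \<Rightarrow> 'a) \<Rightarrow> bool" where
  "action_by_automorphisms A B act \<longleftrightarrow>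
     (\<forall>b\<in>carrier B. act b \<in> hom A A \<and> bij_betw (act b) (carrier A) (carrier A)) \<and>
     (\<forall>a\<in>carrier A. act \<one>\<^bsub>B\<^esub> a = a) \<and>
     (\<forall>b\<in>carrier B. \<forall>b'\<in>carrier B. \<forall>a\<in>carrier A.
        act (b \<otimes>\<^bsub>B\<^esub> b') a = act b (act b' a))"

definition crossed_module ::
  "('a, 'c) monoid_scheme \<Rightarrow> ('b, 'd) monoid_scheme \<Rightarrow> ('b \<Rightarrow> 'a \<Rightarrow> 'a) \<Rightarrow> ('a \<Rightarrow> 'b) \<Rightarrow> bool" where
  "crossed_module A B act \<alpha> \<longleftrightarrow>
     group A \<and> group B \<and> action_by_automorphisms A B act \<and> \<alpha> \<in> hom A B \<and>
     (\<forall>b\<in>carrier B. \<forall>a\<in>carrier A.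
        \<alpha> (act b a) = b \<otimes>\<^bsub>B\<^esub> \<alpha> a \<otimes>\<^bsub>B\<^esub> inv\<^bsub>B\<^esub> b) \<and>
     (\<forall>a\<in>carrier A. \<forall>a'\<in>carrier A.
        act (\<alpha> a) a' = a \<otimes>\<^bsub>A\<^esub> a' \<otimes>\<^bsub>A\<^esub> inv\<^bsub>A\<^esub> a)"

definition xmod_hom ::
  "('a, 'c) monoid_scheme \<Rightarrow> ('b, 'd) monoid_scheme \<Rightarrow> ('b \<Rightarrow> 'a \<Rightarrow> 'a) \<Rightarrow> ('a \<Rightarrow> 'b) \<Rightarrow>
   ('e, 'g) monoid_scheme \<Rightarrow> ('f, 'h) monoid_scheme \<Rightarrow> ('f \<Rightarrow> 'e \<Rightarrow> 'e) \<Rightarrow> ('e \<Rightarrow> 'f) \<Rightarrow>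
   ('a \<Rightarrow> 'e) \<Rightarrow> ('b \<Rightarrow> 'f) \<Rightarrow> bool" where
  "xmod_hom A B act \<alpha> A' B' act' \<alpha>' fA fB \<longleftrightarrow>
     fA \<in> hom A A' \<and> fB \<in> hom B B' \<and>
     (\<forall>a\<in>carrier A. fB (\<alpha> a) = \<alpha>' (fA a)) \<and>
     (\<forall>b\<in>carrier B. \<forall>a\<in>carrier A. fA (act b a) = act' (fB b) (fA a))"

definition pullback_group ::
  "('a, 'c) monoid_scheme \<Rightarrow> ('a \<Rightarrow> 'e) \<Rightarrow> ('a \<Rightarrow> 'e) \<Rightarrow> ('a \<times> 'a) monoid" where
  "pullback_group G s t =
     \<lparr>carrier = {(x, y). x \<in> carrier G \<and> y \<in> carrier G \<and> s x = t y},
      mult = (\<lambda>(x, y) (x', y'). (x \<otimes>\<^bsub>G\<^esub> x', y \<otimes>\<^bsub>G\<^esub> y')),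
      one = (\<one>\<^bsub>G\<^esub>, \<one>\<^bsub>G\<^esub>)\<rparr>"

definition pair_act :: "('b \<Rightarrow> 'a \<Rightarrow> 'a) \<Rightarrow> ('b \<times> 'b) \<Rightarrow> ('a \<times> 'a) \<Rightarrow> ('a \<times> 'a)" where
  "pair_act act = (\<lambda>(b, b') (a, a'). (act b a, act b' a'))"

definition pair_map :: "('a \<Rightarrow> 'b) \<Rightarrow> ('a \<times> 'a) \<Rightarrow> ('b \<times> 'b)" where
  "pair_map f = (\<lambda>(a, a'). (f a, f a'))"

(* Internal category in XMod, with C1 = (A1,B1,act1,<alpha>1), C0 = (A0,B0,act0,<alpha>0),
  morphisms s = (sA,sB), t = (tA,tB), <epsilon> = (eA,eB), m = (mA,mB); m(x,y) = x <circ> y is defined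
  for s x = t y. *)
definition internal_cat_xmod ::
  "('a, 'c) monoid_scheme \<Rightarrow> ('b, 'd) monoid_scheme \<Rightarrow> ('b \<Rightarrow> 'a \<Rightarrow> 'a) \<Rightarrow> ('a \<Rightarrow> 'b) \<Rightarrow>
   ('e, 'g) monoid_scheme \<Rightarrow> ('f, 'h) monoid_scheme \<Rightarrow> ('f \<Rightarrow> 'e \<Rightarrow> 'e) \<Rightarrow> ('e \<Rightarrow> 'f) \<Rightarrow>
   ('a \<Rightarrow> 'e) \<Rightarrow> ('b \<Rightarrow> 'f) \<Rightarrow> ('a \<Rightarrow> 'e) \<Rightarrow> ('b \<Rightarrow> 'f) \<Rightarrow>
   ('e \<Rightarrow> 'a) \<Rightarrow> ('f \<Rightarrow> 'b) \<Rightarrow> ('a \<times> 'a \<Rightarrow> 'a) \<Rightarrow> ('b \<times> 'b \<Rightarrow> 'b) \<Rightarrow> bool" where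
  "internal_cat_xmod A1 B1 act1 \<alpha>1 A0 B0 act0 \<alpha>0 sA sB tA tB eA eB mA mB \<longleftrightarrow>
     crossed_module A1 B1 act1 \<alpha>1 \<and> crossed_module A0 B0 act0 \<alpha>0 \<and>
     xmod_hom A1 B1 act1 \<alpha>1 A0 B0 act0 \<alpha>0 sA sB \<and>
     xmod_hom A1 B1 act1 \<alpha>1 A0 B0 act0 \<alpha>0 tA tB \<and>
     xmod_hom A0 B0 act0 \<alpha>0 A1 B1 act1 \<alpha>1 eA eB \<and>
     xmod_hom (pullback_group A1 sA tA) (pullback_group B1 sB tB) (pair_act act1) (pair_map \<alpha>1)
              A1 B1 act1 \<alpha>1 mA mB \<and>
     \<comment> \<open>s \<epsilon> = 1, t \<epsilon> = 1\<close>
     (\<forall>x\<in>carrier A0. sA (eA x) = x \<and> tA (eA x) = x) \<and>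
     (\<forall>x\<in>carrier B0. sB (eB x) = x \<and> tB (eB x) = x) \<and>
     \<comment> \<open>s m = s \<pi>2, t m = t \<pi>1\<close>
     (\<forall>x\<in>carrier A1. \<forall>y\<in>carrier A1. sA x = tA y \<longrightarrow>
        sA (mA (x, y)) = sA y \<and> tA (mA (x, y)) = tA x) \<and>
     (\<forall>x\<in>carrier B1. \<forall>y\<in>carrier B1. sB x = tB y \<longrightarrow>
        sB (mB (x, y)) = sB y \<and> tB (mB (x, y)) = tB x) \<and>
     \<comment> \<open>associativity\<close>
     (\<forall>x\<in>carrier A1. \<forall>y\<in>carrier A1. \<forall>z\<in>carrier A1. sA x = tA y \<longrightarrow> sA y = tA z \<longrightarrow>
        mA (mA (x, y), z) = mA (x, mA (y, z))) \<and>
     (\<forall>x\<in>carrier B1. \<forall>y\<in>carrier B1. \<forall>z\<in>carrier B1. sB x = tB y \<longrightarrow> sB y = tB z \<longrightarrow>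
        mB (mB (x, y), z) = mB (x, mB (y, z))) \<and>
     \<comment> \<open>unit laws: x \<circ> \<epsilon>(s x) = x = \<epsilon>(t x) \<circ> x\<close>
     (\<forall>x\<in>carrier A1. mA (x, eA (sA x)) = x \<and> mA (eA (tA x), x) = x) \<and>
     (\<forall>x\<in>carrier B1. mB (x, eB (sB x)) = x \<and> mB (eB (tB x), x) = x)"

(* Crossed square. Actions of P on L, M, N are actL, actM, actN; the induced actions
  m<cdot>l = actL (<mu> m) l, n<cdot>l = actL (<nu> n) l, n<cdot>m = actM (<nu> n) m, m<cdot>n = actN (<mu> m) n. *)
definition crossed_square ::
  "('l, 'c1) monoid_scheme \<Rightarrow> ('m, 'c2) monoid_scheme \<Rightarrow> ('n, 'c3) monoid_scheme \<Rightarrow> ('p, 'c4) monoid_scheme \<Rightarrow>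
   ('l \<Rightarrow> 'm) \<Rightarrow> ('l \<Rightarrow> 'n) \<Rightarrow> ('m \<Rightarrow> 'p) \<Rightarrow> ('n \<Rightarrow> 'p) \<Rightarrow>
   ('p \<Rightarrow> 'l \<Rightarrow> 'l) \<Rightarrow> ('p \<Rightarrow> 'm \<Rightarrow> 'm) \<Rightarrow> ('p \<Rightarrow> 'n \<Rightarrow> 'n) \<Rightarrow> ('m \<Rightarrow> 'n \<Rightarrow> 'l) \<Rightarrow> bool" where
  "crossed_square L M N P lam lam' mu nu actL actM actN h \<longleftrightarrow>
     group L \<and> group M \<and> group N \<and> group P \<and>
     lam \<in> hom L M \<and> lam' \<in> hom L N \<and> mu \<in> hom M P \<and> nu \<in> hom N P \<and>
     (\<forall>l\<in>carrier L. nu (lam' l) = mu (lam l)) \<and>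
     action_by_automorphisms L P actL \<and> action_by_automorphisms M P actM \<and>
     action_by_automorphisms N P actN \<and>
     (\<forall>m\<in>carrier M. \<forall>n\<in>carrier N. h m n \<in> carrier L) \<and>
     \<comment> \<open>(i)\<close>
     (\<forall>p\<in>carrier P. \<forall>l\<in>carrier L. lam (actL p l) = actM p (lam l) \<and> lam' (actL p l) = actN p (lam' l)) \<and>
     crossed_module M P actM mu \<and> crossed_module N P actN nu \<and>
     crossed_module L P actL (mu \<circ> lam) \<and>
     \<comment> \<open>(ii)\<close>
     (\<forall>m\<in>carrier M. \<forall>n\<in>carrier N.
        lam (h m n) = m \<otimes>\<^bsub>M\<^esub> actM (nu n) (inv\<^bsub>M\<^esub> m) \<and>
        lam' (h m n) = actN (mu m) n \<otimes>\<^bsub>N\<^esub> inv\<^bsub>N\<^esub> n) \<and>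
     \<comment> \<open>(iii)\<close>
     (\<forall>l\<in>carrier L. \<forall>n\<in>carrier N.
        h (lam l) n = l \<otimes>\<^bsub>L\<^esub> actL (nu n) (inv\<^bsub>L\<^esub> l)) \<and>
     (\<forall>m\<in>carrier M. \<forall>l\<in>carrier L.
        h m (lam' l) = actL (mu m) l \<otimes>\<^bsub>L\<^esub> inv\<^bsub>L\<^esub> l) \<and>
     \<comment> \<open>(iv)\<close>
     (\<forall>m\<in>carrier M. \<forall>m'\<in>carrier M. \<forall>n\<in>carrier N.
        h (m \<otimes>\<^bsub>M\<^esub> m') n = actL (mu m) (h m' n) \<otimes>\<^bsub>L\<^esub> h m n) \<and>
     (\<forall>m\<in>carrier M. \<forall>n\<in>carrier N. \<forall>n'\<in>carrier N.
        h m (n \<otimes>\<^bsub>N\<^esub> n') = h m n \<otimes>\<^bsub>L\<^esub> actL (nu n) (h m n')) \<and>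
     \<comment> \<open>(v)\<close>
     (\<forall>p\<in>carrier P. \<forall>m\<in>carrier M. \<forall>n\<in>carrier N.
        h (actM p m) (actN p n) = actL p (h m n))"

definition semidirect ::
  "('a, 'c) monoid_scheme \<Rightarrow> ('b, 'd) monoid_scheme \<Rightarrow> ('b \<Rightarrow> 'a \<Rightarrow> 'a) \<Rightarrow> ('a \<times> 'b) monoid" where
  "semidirect G H act =
     \<lparr>carrier = carrier G \<times> carrier H,
      mult = (\<lambda>(g, h) (g', h'). (g \<otimes>\<^bsub>G\<^esub> act h g', h \<otimes>\<^bsub>H\<^esub> h')),
      one = (\<one>\<^bsub>G\<^esub>, \<one>\<^bsub>H\<^esub>)\<rparr>"

end

theory Submission
  imports Defs
begin


lemma grp_hom: "group A \<Longrightarrow> group B \<Longrightarrow> f \<in> hom A B \<Longrightarrow> group_hom A B f"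
  by (simp add: group_hom_def group_hom_axioms_def)

context
  fixes A :: "('a,'c) monoid_scheme" and B :: "('b,'d) monoid_scheme" and act
  assumes aba: "action_by_automorphisms A B act" and gA: "group A" and gB: "group B"
begin
lemma aba_hom: "b \<in> carrier B \<Longrightarrow> group_hom A A (act b)"
  using aba gA by (intro grp_hom) (auto simp: action_by_automorphisms_def)
lemma aba_closed[simp]: "b \<in> carrier B \<Longrightarrow> a \<in> carrier A \<Longrightarrow> act b a \<in> carrier A"
  by (rule group_hom.hom_closed[OF aba_hom])
lemma aba_mult[simp]: "b \<in> carrier B \<Longrightarrow> x \<in> carrier A \<Longrightarrow> y \<in> carrier A \<Longrightarrow> act b (x \<otimes>\<^bsub>A\<^esub> y) = act b x \<otimes>\<^bsub>A\<^esub> act b y"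
  by (rule group_hom.hom_mult[OF aba_hom])
lemma aba_one[simp]: "b \<in> carrier B \<Longrightarrow> act b \<one>\<^bsub>A\<^esub> = \<one>\<^bsub>A\<^esub>"
  by (rule group_hom.hom_one[OF aba_hom])
lemma aba_inv[simp]: "b \<in> carrier B \<Longrightarrow> x \<in> carrier A \<Longrightarrow> act b (inv\<^bsub>A\<^esub> x) = inv\<^bsub>A\<^esub> (act b x)"
  by (rule group_hom.hom_inv[OF aba_hom])
lemma aba_id[simp]: "x \<in> carrier A \<Longrightarrow> act \<one>\<^bsub>B\<^esub> x = x"
  using aba by (simp add: action_by_automorphisms_def)
lemma aba_comp: "b \<in> carrier B \<Longrightarrow> b' \<in> carrier B \<Longrightarrow> x \<in> carrier A \<Longrightarrow> act (b \<otimes>\<^bsub>B\<^esub> b') x = act b (act b' x)"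
  using aba by (simp add: action_by_automorphisms_def)
end

lemma aba_from_action:
  assumes gA: "group A" and gB: "group B"
    and cl: "\<And>b a. b \<in> carrier B \<Longrightarrow> a \<in> carrier A \<Longrightarrow> act b a \<in> carrier A"
    and ml: "\<And>b x y. b \<in> carrier B \<Longrightarrow> x \<in> carrier A \<Longrightarrow> y \<in> carrier A \<Longrightarrow> act b (x \<otimes>\<^bsub>A\<^esub> y) = act b x \<otimes>\<^bsub>A\<^esub> act b y"
    and idl: "\<And>a. a \<in> carrier A \<Longrightarrow> act \<one>\<^bsub>B\<^esub> a = a"
    and cp: "\<And>b b' a. b \<in> carrier B \<Longrightarrow> b' \<in> carrier B \<Longrightarrow> a \<in> carrier A \<Longrightarrow> act (b \<otimes>\<^bsub>B\<^esub> b') a = act b (act b' a)"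
  shows "action_by_automorphisms A B act"
  unfolding action_by_automorphisms_def
proof (intro conjI ballI)
  fix b assume b: "b \<in> carrier B"
  show "act b \<in> hom A A" using cl ml b by (auto simp: hom_def)
  show "bij_betw (act b) (carrier A) (carrier A)"
  proof (rule bij_betwI[where g="act (inv\<^bsub>B\<^esub> b)"])
    show "act b \<in> carrier A \<rightarrow> carrier A" using cl b by auto
    show "act (inv\<^bsub>B\<^esub> b) \<in> carrier A \<rightarrow> carrier A" using cl b group.inv_closed[OF gB] by auto
    fix x assume x: "x \<in> carrier A"
    show "act (inv\<^bsub>B\<^esub> b) (act b x) = x" using cp[symmetric] idl x b gB by (simp add: group.inv_closed group.l_inv)
    show "act b (act (inv\<^bsub>B\<^esub> b) x) = x" using cp[symmetric] idl x b gB by (simp add: group.inv_closed group.r_inv)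
  qed
qed (use idl cp in auto)

lemma semidirect_carrier[simp]: "carrier (semidirect G H act) = carrier G \<times> carrier H"
  by (simp add: semidirect_def)
lemma semidirect_mult[simp]: "(g, h) \<otimes>\<^bsub>semidirect G H act\<^esub> (g', h') = (g \<otimes>\<^bsub>G\<^esub> act h g', h \<otimes>\<^bsub>H\<^esub> h')"
  by (simp add: semidirect_def)
lemma semidirect_one[simp]: "\<one>\<^bsub>semidirect G H act\<^esub> = (\<one>\<^bsub>G\<^esub>, \<one>\<^bsub>H\<^esub>)"
  by (simp add: semidirect_def)

lemma semidirect_group:
  assumes aba: "action_by_automorphisms G H act" and gG: "group G" and gH: "group H"
  shows "group (semidirect G H act)"
proof -
  interpret G: group G by fact
  interpret H: group H by fact
  note [simp] = aba_closed[OF aba gG gH] aba_mult[OF aba gG gH] aba_one[OF aba gG gH] aba_id[OF aba gG gH]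
    aba_comp[OF aba gG gH] G.m_assoc H.m_assoc
  show ?thesis
  proof (rule groupI)
    fix x y assume "x \<in> carrier (semidirect G H act)" "y \<in> carrier (semidirect G H act)"
    then show "x \<otimes>\<^bsub>semidirect G H act\<^esub> y \<in> carrier (semidirect G H act)" by (cases x, cases y) auto
  next
    show "\<one>\<^bsub>semidirect G H act\<^esub> \<in> carrier (semidirect G H act)" by simp
  next
    fix x y z assume "x \<in> carrier (semidirect G H act)" "y \<in> carrier (semidirect G H act)" "z \<in> carrier (semidirect G H act)"
    then show "x \<otimes>\<^bsub>semidirect G H act\<^esub> y \<otimes>\<^bsub>semidirect G H act\<^esub> z = x \<otimes>\<^bsub>semidirect G H act\<^esub> (y \<otimes>\<^bsub>semidirect G H act\<^esub> z)"
      by (cases x, cases y, cases z) auto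
  next
    fix x assume "x \<in> carrier (semidirect G H act)"
    then show "\<one>\<^bsub>semidirect G H act\<^esub> \<otimes>\<^bsub>semidirect G H act\<^esub> x = x" by (cases x) auto
  next
    fix x assume x: "x \<in> carrier (semidirect G H act)"
    obtain g h where gh: "x = (g, h)" "g \<in> carrier G" "h \<in> carrier H" using x by (cases x) auto
    have "(act (inv\<^bsub>H\<^esub> h) (inv\<^bsub>G\<^esub> g), inv\<^bsub>H\<^esub> h) \<otimes>\<^bsub>semidirect G H act\<^esub> x = \<one>\<^bsub>semidirect G H act\<^esub>"
      using gh by (simp flip: aba_mult[OF aba gG gH])
    then show "\<exists>y\<in>carrier (semidirect G H act). y \<otimes>\<^bsub>semidirect G H act\<^esub> x = \<one>\<^bsub>semidirect G H act\<^esub>"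
      using gh by (intro bexI[of _ "(act (inv\<^bsub>H\<^esub> h) (inv\<^bsub>G\<^esub> g), inv\<^bsub>H\<^esub> h)"]) auto
  qed
qed


lemma semidirect_inv:
  assumes aba: "action_by_automorphisms G H act" and gG: "group G" and gH: "group H"
    and g: "g \<in> carrier G" and h: "h \<in> carrier H"
  shows "inv\<^bsub>semidirect G H act\<^esub> (g, h) = (act (inv\<^bsub>H\<^esub> h) (inv\<^bsub>G\<^esub> g), inv\<^bsub>H\<^esub> h)"
proof -
  interpret G: group G by fact
  interpret H: group H by fact
  interpret S: group "semidirect G H act" using semidirect_group[OF assms(1-3)] .
  have "(act (inv\<^bsub>H\<^esub> h) (inv\<^bsub>G\<^esub> g), inv\<^bsub>H\<^esub> h) \<otimes>\<^bsub>semidirect G H act\<^esub> (g, h) = \<one>\<^bsub>semidirect G H act\<^esub>"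
    using g h by (simp add: aba_mult[OF aba gG gH, symmetric] aba_one[OF aba gG gH])
  then show ?thesis using g h
    by (intro S.inv_equality) (simp_all add: aba_closed[OF aba gG gH])
qed

lemma (in group) cancel1[simp]: "x \<in> carrier G \<Longrightarrow> y \<in> carrier G \<Longrightarrow> x \<otimes> (inv x \<otimes> y) = y"
  by (simp flip: m_assoc)
lemma (in group) cancel2[simp]: "x \<in> carrier G \<Longrightarrow> y \<in> carrier G \<Longrightarrow> inv x \<otimes> (x \<otimes> y) = y"
  by (simp flip: m_assoc)



locale xsq =
  fixes L :: "('l, 'c1) monoid_scheme" and M :: "('m, 'c2) monoid_scheme"
    and N :: "('n, 'c3) monoid_scheme" and P :: "('p, 'c4) monoid_scheme"
    and lam :: "'l \<Rightarrow> 'm" and lam' :: "'l \<Rightarrow> 'n" and mu :: "'m \<Rightarrow> 'p" and nu :: "'n \<Rightarrow> 'p"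
    and actL :: "'p \<Rightarrow> 'l \<Rightarrow> 'l" and actM :: "'p \<Rightarrow> 'm \<Rightarrow> 'm" and actN :: "'p \<Rightarrow> 'n \<Rightarrow> 'n"
    and h :: "'m \<Rightarrow> 'n \<Rightarrow> 'l"
  assumes cs: "crossed_square L M N P lam lam' mu nu actL actM actN h"
begin

lemma gL: "group L" and gM: "group M" and gN: "group N" and gP: "group P"
  using cs by (simp_all add: crossed_square_def)

sublocale L: group L by (rule gL)
sublocale M: group M by (rule gM)
sublocale N: group N by (rule gN)
sublocale P: group P by (rule gP)

lemma lamh: "group_hom L M lam" and lam'h: "group_hom L N lam'"
  and muh: "group_hom M P mu" and nuh: "group_hom N P nu"
  using cs by (simp_all add: crossed_square_def grp_hom gL gM gN gP)

lemmas hom_simps[simp] =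
  group_hom.hom_mult[OF lamh] group_hom.hom_closed[OF lamh] group_hom.hom_one[OF lamh] group_hom.hom_inv[OF lamh]
  group_hom.hom_mult[OF lam'h] group_hom.hom_closed[OF lam'h] group_hom.hom_one[OF lam'h] group_hom.hom_inv[OF lam'h]
  group_hom.hom_mult[OF muh] group_hom.hom_closed[OF muh] group_hom.hom_one[OF muh] group_hom.hom_inv[OF muh]
  group_hom.hom_mult[OF nuh] group_hom.hom_closed[OF nuh] group_hom.hom_one[OF nuh] group_hom.hom_inv[OF nuh]

lemma abaL: "action_by_automorphisms L P actL" and abaM: "action_by_automorphisms M P actM"
  and abaN: "action_by_automorphisms N P actN"
  using cs by (simp_all add: crossed_square_def)

lemmas act_simps[simp] =
  aba_closed[OF abaL gL gP] aba_mult[OF abaL gL gP] aba_one[OF abaL gL gP] aba_inv[OF abaL gL gP] aba_id[OF abaL gL gP]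
  aba_closed[OF abaM gM gP] aba_mult[OF abaM gM gP] aba_one[OF abaM gM gP] aba_inv[OF abaM gM gP] aba_id[OF abaM gM gP]
  aba_closed[OF abaN gN gP] aba_mult[OF abaN gN gP] aba_one[OF abaN gN gP] aba_inv[OF abaN gN gP] aba_id[OF abaN gN gP]

lemmas aL_comp = aba_comp[OF abaL gL gP]
lemmas aM_comp = aba_comp[OF abaM gM gP]
lemmas aN_comp = aba_comp[OF abaN gN gP]

lemma aL_cancel[simp]: "p \<in> carrier P \<Longrightarrow> x \<in> carrier L \<Longrightarrow> actL p (actL (inv\<^bsub>P\<^esub> p) x) = x"
  "p \<in> carrier P \<Longrightarrow> x \<in> carrier L \<Longrightarrow> actL (inv\<^bsub>P\<^esub> p) (actL p x) = x"
  by (simp_all flip: aL_comp)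
lemma aM_cancel[simp]: "p \<in> carrier P \<Longrightarrow> x \<in> carrier M \<Longrightarrow> actM p (actM (inv\<^bsub>P\<^esub> p) x) = x"
  "p \<in> carrier P \<Longrightarrow> x \<in> carrier M \<Longrightarrow> actM (inv\<^bsub>P\<^esub> p) (actM p x) = x"
  by (simp_all flip: aM_comp)
lemma aN_cancel[simp]: "p \<in> carrier P \<Longrightarrow> x \<in> carrier N \<Longrightarrow> actN p (actN (inv\<^bsub>P\<^esub> p) x) = x"
  "p \<in> carrier P \<Longrightarrow> x \<in> carrier N \<Longrightarrow> actN (inv\<^bsub>P\<^esub> p) (actN p x) = x"
  by (simp_all flip: aN_comp)

lemma xmM: "crossed_module M P actM mu" and xmN: "crossed_module N P actN nu"
  and xmL: "crossed_module L P actL (mu \<circ> lam)"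
  using cs by (simp_all add: crossed_square_def)

lemma muA: "p \<in> carrier P \<Longrightarrow> m \<in> carrier M \<Longrightarrow> mu (actM p m) = p \<otimes>\<^bsub>P\<^esub> mu m \<otimes>\<^bsub>P\<^esub> inv\<^bsub>P\<^esub> p"
  and peiM: "m \<in> carrier M \<Longrightarrow> m' \<in> carrier M \<Longrightarrow> actM (mu m) m' = m \<otimes>\<^bsub>M\<^esub> m' \<otimes>\<^bsub>M\<^esub> inv\<^bsub>M\<^esub> m"
  using xmM by (simp_all add: crossed_module_def)
lemma nuA: "p \<in> carrier P \<Longrightarrow> n \<in> carrier N \<Longrightarrow> nu (actN p n) = p \<otimes>\<^bsub>P\<^esub> nu n \<otimes>\<^bsub>P\<^esub> inv\<^bsub>P\<^esub> p"
  and peiN: "n \<in> carrier N \<Longrightarrow> n' \<in> carrier N \<Longrightarrow> actN (nu n) n' = n \<otimes>\<^bsub>N\<^esub> n' \<otimes>\<^bsub>N\<^esub> inv\<^bsub>N\<^esub> n"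
  using xmN by (simp_all add: crossed_module_def)
lemma peiL: "l \<in> carrier L \<Longrightarrow> l' \<in> carrier L \<Longrightarrow> actL (mu (lam l)) l' = l \<otimes>\<^bsub>L\<^esub> l' \<otimes>\<^bsub>L\<^esub> inv\<^bsub>L\<^esub> l"
  using xmL by (simp add: crossed_module_def)

lemma nulam: "l \<in> carrier L \<Longrightarrow> nu (lam' l) = mu (lam l)"
  and lamE: "p \<in> carrier P \<Longrightarrow> l \<in> carrier L \<Longrightarrow> lam (actL p l) = actM p (lam l)"
  and lam'E: "p \<in> carrier P \<Longrightarrow> l \<in> carrier L \<Longrightarrow> lam' (actL p l) = actN p (lam' l)"
  and h_closed[simp]: "m \<in> carrier M \<Longrightarrow> n \<in> carrier N \<Longrightarrow> h m n \<in> carrier L"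
  and h_lam: "m \<in> carrier M \<Longrightarrow> n \<in> carrier N \<Longrightarrow> lam (h m n) = m \<otimes>\<^bsub>M\<^esub> actM (nu n) (inv\<^bsub>M\<^esub> m)"
  and h_lam': "m \<in> carrier M \<Longrightarrow> n \<in> carrier N \<Longrightarrow> lam' (h m n) = actN (mu m) n \<otimes>\<^bsub>N\<^esub> inv\<^bsub>N\<^esub> n"
  and h3a: "l \<in> carrier L \<Longrightarrow> n \<in> carrier N \<Longrightarrow> h (lam l) n = l \<otimes>\<^bsub>L\<^esub> actL (nu n) (inv\<^bsub>L\<^esub> l)"
  and h3b: "m \<in> carrier M \<Longrightarrow> l \<in> carrier L \<Longrightarrow> h m (lam' l) = actL (mu m) l \<otimes>\<^bsub>L\<^esub> inv\<^bsub>L\<^esub> l"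
  and h4a: "m \<in> carrier M \<Longrightarrow> m' \<in> carrier M \<Longrightarrow> n \<in> carrier N \<Longrightarrow> h (m \<otimes>\<^bsub>M\<^esub> m') n = actL (mu m) (h m' n) \<otimes>\<^bsub>L\<^esub> h m n"
  and h4b: "m \<in> carrier M \<Longrightarrow> n \<in> carrier N \<Longrightarrow> n' \<in> carrier N \<Longrightarrow> h m (n \<otimes>\<^bsub>N\<^esub> n') = h m n \<otimes>\<^bsub>L\<^esub> actL (nu n) (h m n')"
  and h5: "p \<in> carrier P \<Longrightarrow> m \<in> carrier M \<Longrightarrow> n \<in> carrier N \<Longrightarrow> h (actM p m) (actN p n) = actL p (h m n)"
  using cs by (simp_all add: crossed_square_def)

lemma h_one[simp]: "n \<in> carrier N \<Longrightarrow> h \<one>\<^bsub>M\<^esub> n = \<one>\<^bsub>L\<^esub>"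
proof -
  assume n: "n \<in> carrier N"
  have "h (\<one>\<^bsub>M\<^esub> \<otimes>\<^bsub>M\<^esub> \<one>\<^bsub>M\<^esub>) n = actL (mu \<one>\<^bsub>M\<^esub>) (h \<one>\<^bsub>M\<^esub> n) \<otimes>\<^bsub>L\<^esub> h \<one>\<^bsub>M\<^esub> n" using n by (intro h4a) auto
  then show ?thesis using n by simp
qed

lemma equivL: "p \<in> carrier P \<Longrightarrow> n \<in> carrier N \<Longrightarrow> z \<in> carrier L \<Longrightarrow>
   actL p (actL (nu n) z) = actL (nu (actN p n)) (actL p z)"
  by (simp add: nuA aL_comp P.m_assoc)
lemma equivLM: "p \<in> carrier P \<Longrightarrow> m \<in> carrier M \<Longrightarrow> z \<in> carrier L \<Longrightarrow>
   actL p (actL (mu m) z) = actL (mu (actM p m)) (actL p z)"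
  by (simp add: muA aL_comp P.m_assoc)

lemma key1:
  assumes m: "m \<in> carrier M" and x: "x \<in> carrier N" and z: "z \<in> carrier L"
  shows "actL (mu m) (actL (nu x) z) \<otimes>\<^bsub>L\<^esub> h m x = h m x \<otimes>\<^bsub>L\<^esub> actL (nu x) (actL (mu m) z)"
proof -
  define hh where "hh = h m x"
  define w where "w = actL (nu x) (actL (mu m) z)"
  have hh: "hh \<in> carrier L" and w: "w \<in> carrier L" using m x z by (simp_all add: hh_def w_def)
  have "hh \<otimes>\<^bsub>L\<^esub> w \<otimes>\<^bsub>L\<^esub> inv\<^bsub>L\<^esub> hh = actL (mu (lam hh)) w" using hh w by (simp add: peiL)
  also have "\<dots> = actL (mu m) (actL (nu x) z)"
    using m x z by (simp add: hh_def w_def h_lam muA aL_comp P.m_assoc P.inv_mult_group)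
  finally have e: "hh \<otimes>\<^bsub>L\<^esub> w \<otimes>\<^bsub>L\<^esub> inv\<^bsub>L\<^esub> hh = actL (mu m) (actL (nu x) z)" .
  have "actL (mu m) (actL (nu x) z) \<otimes>\<^bsub>L\<^esub> hh = hh \<otimes>\<^bsub>L\<^esub> w \<otimes>\<^bsub>L\<^esub> inv\<^bsub>L\<^esub> hh \<otimes>\<^bsub>L\<^esub> hh" by (simp add: e)
  also have "\<dots> = hh \<otimes>\<^bsub>L\<^esub> w" using hh w by (simp add: L.m_assoc)
  finally show ?thesis by (simp add: hh_def w_def)
qed

end


context xsq begin

abbreviation "A1 \<equiv> semidirect L N (\<lambda>n l. actL (nu n) l)"
abbreviation "B1 \<equiv> semidirect M P actM"
abbreviation "act1 \<equiv> (\<lambda>(m, p) (l, n). (actL (mu m) (actL p l) \<otimes>\<^bsub>L\<^esub> h m (actN p n), actN p n))"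
abbreviation "\<alpha>1 \<equiv> (\<lambda>(l, n). (lam l, nu n))"

lemma abaLN: "action_by_automorphisms L N (\<lambda>n l. actL (nu n) l)"
  by (rule aba_from_action) (simp_all add: aL_comp gL gN)

lemma gA1: "group A1" by (rule semidirect_group[OF abaLN gL gN])
lemma gB1: "group B1" by (rule semidirect_group[OF abaM gM gP])

lemma A1_inv[simp]: "l \<in> carrier L \<Longrightarrow> n \<in> carrier N \<Longrightarrow> inv\<^bsub>A1\<^esub> (l, n) = (actL (inv\<^bsub>P\<^esub> (nu n)) (inv\<^bsub>L\<^esub> l), inv\<^bsub>N\<^esub> n)"
  by (simp add: semidirect_inv[OF abaLN gL gN])
lemma B1_inv[simp]: "m \<in> carrier M \<Longrightarrow> p \<in> carrier P \<Longrightarrow> inv\<^bsub>B1\<^esub> (m, p) = (actM (inv\<^bsub>P\<^esub> p) (inv\<^bsub>M\<^esub> m), inv\<^bsub>P\<^esub> p)"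
  by (simp add: semidirect_inv[OF abaM gM gP])

lemma act1_mult:
  assumes m: "m \<in> carrier M" and p: "p \<in> carrier P" and l: "l \<in> carrier L" and n: "n \<in> carrier N"
    and l': "l' \<in> carrier L" and n': "n' \<in> carrier N"
  shows "act1 (m, p) ((l, n) \<otimes>\<^bsub>A1\<^esub> (l', n')) = act1 (m, p) (l, n) \<otimes>\<^bsub>A1\<^esub> act1 (m, p) (l', n')"
proof -
  have eq: "actL (mu m) (actL p (l \<otimes>\<^bsub>L\<^esub> actL (nu n) l')) \<otimes>\<^bsub>L\<^esub> h m (actN p (n \<otimes>\<^bsub>N\<^esub> n'))
    = (actL (mu m) (actL p l) \<otimes>\<^bsub>L\<^esub> h m (actN p n)) \<otimes>\<^bsub>L\<^esub> actL (nu (actN p n)) (actL (mu m) (actL p l') \<otimes>\<^bsub>L\<^esub> h m (actN p n'))"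
  proof -
    have "actL (mu m) (actL p (l \<otimes>\<^bsub>L\<^esub> actL (nu n) l')) \<otimes>\<^bsub>L\<^esub> h m (actN p (n \<otimes>\<^bsub>N\<^esub> n'))
      = actL (mu m) (actL p l) \<otimes>\<^bsub>L\<^esub> (actL (mu m) (actL (nu (actN p n)) (actL p l')) \<otimes>\<^bsub>L\<^esub> h m (actN p n)) \<otimes>\<^bsub>L\<^esub> actL (nu (actN p n)) (h m (actN p n'))"
      using assms by (simp add: equivL[of p n l'] h4b L.m_assoc)
    also have "\<dots> = actL (mu m) (actL p l) \<otimes>\<^bsub>L\<^esub> (h m (actN p n) \<otimes>\<^bsub>L\<^esub> actL (nu (actN p n)) (actL (mu m) (actL p l'))) \<otimes>\<^bsub>L\<^esub> actL (nu (actN p n)) (h m (actN p n'))"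
      using assms by (simp add: key1)
    also have "\<dots> = (actL (mu m) (actL p l) \<otimes>\<^bsub>L\<^esub> h m (actN p n)) \<otimes>\<^bsub>L\<^esub> actL (nu (actN p n)) (actL (mu m) (actL p l') \<otimes>\<^bsub>L\<^esub> h m (actN p n'))"
      using assms by (simp add: L.m_assoc)
    finally show ?thesis .
  qed
  have "act1 (m, p) ((l, n) \<otimes>\<^bsub>A1\<^esub> (l', n')) = (actL (mu m) (actL p (l \<otimes>\<^bsub>L\<^esub> actL (nu n) l')) \<otimes>\<^bsub>L\<^esub> h m (actN p (n \<otimes>\<^bsub>N\<^esub> n')), actN p (n \<otimes>\<^bsub>N\<^esub> n'))"
    by simp
  also have "\<dots> = ((actL (mu m) (actL p l) \<otimes>\<^bsub>L\<^esub> h m (actN p n)) \<otimes>\<^bsub>L\<^esub> actL (nu (actN p n)) (actL (mu m) (actL p l') \<otimes>\<^bsub>L\<^esub> h m (actN p n')), actN p n \<otimes>\<^bsub>N\<^esub> actN p n')"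
    unfolding eq using assms by simp
  also have "\<dots> = act1 (m, p) (l, n) \<otimes>\<^bsub>A1\<^esub> act1 (m, p) (l', n')" by simp
  finally show ?thesis .
qed

lemma act1_comp:
  assumes m: "m \<in> carrier M" and p: "p \<in> carrier P" and m': "m' \<in> carrier M" and p': "p' \<in> carrier P"
    and l: "l \<in> carrier L" and n: "n \<in> carrier N"
  shows "act1 ((m, p) \<otimes>\<^bsub>B1\<^esub> (m', p')) (l, n) = act1 (m, p) (act1 (m', p') (l, n))"
proof -
  have eq: "actL (mu (m \<otimes>\<^bsub>M\<^esub> actM p m')) (actL (p \<otimes>\<^bsub>P\<^esub> p') l) \<otimes>\<^bsub>L\<^esub> h (m \<otimes>\<^bsub>M\<^esub> actM p m') (actN (p \<otimes>\<^bsub>P\<^esub> p') n)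
     = actL (mu m) (actL p (actL (mu m') (actL p' l) \<otimes>\<^bsub>L\<^esub> h m' (actN p' n))) \<otimes>\<^bsub>L\<^esub> h m (actN p (actN p' n))"
  proof -
    have "actL (mu (m \<otimes>\<^bsub>M\<^esub> actM p m')) (actL (p \<otimes>\<^bsub>P\<^esub> p') l) \<otimes>\<^bsub>L\<^esub> h (m \<otimes>\<^bsub>M\<^esub> actM p m') (actN (p \<otimes>\<^bsub>P\<^esub> p') n)
      = actL (mu m) (actL (mu (actM p m')) (actL p (actL p' l))) \<otimes>\<^bsub>L\<^esub> (actL (mu m) (h (actM p m') (actN p (actN p' n))) \<otimes>\<^bsub>L\<^esub> h m (actN p (actN p' n)))"
      using assms apply (simp add: aL_comp aN_comp)
      apply (subst h4a)
      apply (simp_all add: L.m_assoc)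
      done
    also have "\<dots> = actL (mu m) (actL p (actL (mu m') (actL p' l) \<otimes>\<^bsub>L\<^esub> h m' (actN p' n))) \<otimes>\<^bsub>L\<^esub> h m (actN p (actN p' n))"
      using assms by (simp add: equivLM[of p m' "actL p' l"] h5 L.m_assoc)
    finally show ?thesis .
  qed
  have "act1 ((m, p) \<otimes>\<^bsub>B1\<^esub> (m', p')) (l, n) = (actL (mu (m \<otimes>\<^bsub>M\<^esub> actM p m')) (actL (p \<otimes>\<^bsub>P\<^esub> p') l) \<otimes>\<^bsub>L\<^esub> h (m \<otimes>\<^bsub>M\<^esub> actM p m') (actN (p \<otimes>\<^bsub>P\<^esub> p') n), actN (p \<otimes>\<^bsub>P\<^esub> p') n)"
    by simp
  also have "\<dots> = (actL (mu m) (actL p (actL (mu m') (actL p' l) \<otimes>\<^bsub>L\<^esub> h m' (actN p' n))) \<otimes>\<^bsub>L\<^esub> h m (actN p (actN p' n)), actN p (actN p' n))"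
    unfolding eq using assms by (simp add: aN_comp)
  also have "\<dots> = act1 (m, p) (act1 (m', p') (l, n))" by simp
  finally show ?thesis .
qed

lemma act1_closed: "m \<in> carrier M \<Longrightarrow> p \<in> carrier P \<Longrightarrow> l \<in> carrier L \<Longrightarrow> n \<in> carrier N \<Longrightarrow>
  act1 (m, p) (l, n) \<in> carrier A1"
  by simp

lemma aba1: "action_by_automorphisms A1 B1 act1"
proof (rule aba_from_action[OF gA1 gB1])
  fix b a assume "b \<in> carrier B1" "a \<in> carrier A1"
  then show "act1 b a \<in> carrier A1" by (cases b, cases a) auto
next
  fix b x y assume "b \<in> carrier B1" "x \<in> carrier A1" "y \<in> carrier A1"
  then obtain m p l n l' n' where b: "b = (m, p)" and x: "x = (l, n)" and y: "y = (l', n')"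
    and c: "m \<in> carrier M" "p \<in> carrier P" "l \<in> carrier L" "n \<in> carrier N" "l' \<in> carrier L" "n' \<in> carrier N"
    by (cases b, cases x, cases y) auto
  show "act1 b (x \<otimes>\<^bsub>A1\<^esub> y) = act1 b x \<otimes>\<^bsub>A1\<^esub> act1 b y" unfolding b x y by (rule act1_mult[OF c])
next
  fix a assume "a \<in> carrier A1"
  then show "act1 \<one>\<^bsub>B1\<^esub> a = a" by (cases a) auto
next
  fix b b' a assume "b \<in> carrier B1" "b' \<in> carrier B1" "a \<in> carrier A1"
  then obtain m p m' p' l n where b: "b = (m, p)" and b': "b' = (m', p')" and a: "a = (l, n)"
    and c: "m \<in> carrier M" "p \<in> carrier P" "m' \<in> carrier M" "p' \<in> carrier P" "l \<in> carrier L" "n \<in> carrier N"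
    by (cases b, cases b', cases a) auto
  show "act1 (b \<otimes>\<^bsub>B1\<^esub> b') a = act1 b (act1 b' a)" unfolding b b' a by (rule act1_comp[OF c])
qed

end


context xsq begin

lemma alpha1_hom: "\<alpha>1 \<in> hom A1 B1"
  unfolding hom_def by (auto simp: lamE)

lemma alpha1_act:
  assumes m: "m \<in> carrier M" and p: "p \<in> carrier P" and l: "l \<in> carrier L" and n: "n \<in> carrier N"
  shows "\<alpha>1 (act1 (m, p) (l, n)) = (m, p) \<otimes>\<^bsub>B1\<^esub> \<alpha>1 (l, n) \<otimes>\<^bsub>B1\<^esub> inv\<^bsub>B1\<^esub> (m, p)"
  using assms by (simp add: lamE h_lam nuA peiM aM_comp M.m_assoc P.m_assoc)

lemma alpha1_pei:
  assumes l: "l \<in> carrier L" and n: "n \<in> carrier N" and l': "l' \<in> carrier L" and n': "n' \<in> carrier N"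
  shows "act1 (\<alpha>1 (l, n)) (l', n') = (l, n) \<otimes>\<^bsub>A1\<^esub> (l', n') \<otimes>\<^bsub>A1\<^esub> inv\<^bsub>A1\<^esub> (l, n)"
  using assms by (simp add: peiL h3a peiN aL_comp L.m_assoc N.m_assoc P.m_assoc)

lemma xm1: "crossed_module A1 B1 act1 \<alpha>1"
  unfolding crossed_module_def
proof (intro conjI ballI gA1 gB1 aba1 alpha1_hom)
  fix b a assume "b \<in> carrier B1" "a \<in> carrier A1"
  then obtain m p l n where b: "b = (m, p)" and a: "a = (l, n)"
    and c: "m \<in> carrier M" "p \<in> carrier P" "l \<in> carrier L" "n \<in> carrier N"
    by (cases b, cases a) auto
  show "\<alpha>1 (act1 b a) = b \<otimes>\<^bsub>B1\<^esub> \<alpha>1 a \<otimes>\<^bsub>B1\<^esub> inv\<^bsub>B1\<^esub> b" unfolding a b by (rule alpha1_act[OF c])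
next
  fix a a' assume "a \<in> carrier A1" "a' \<in> carrier A1"
  then obtain l n l' n' where a: "a = (l, n)" and a': "a' = (l', n')"
    and c: "l \<in> carrier L" "n \<in> carrier N" "l' \<in> carrier L" "n' \<in> carrier N"
    by (cases a, cases a') auto
  show "act1 (\<alpha>1 a) a' = a \<otimes>\<^bsub>A1\<^esub> a' \<otimes>\<^bsub>A1\<^esub> inv\<^bsub>A1\<^esub> a" unfolding a a' by (rule alpha1_pei[OF c])
qed

end


lemma pullback_carrier[simp]: "carrier (pullback_group G s t) = {(x, y). x \<in> carrier G \<and> y \<in> carrier G \<and> s x = t y}"
  by (simp add: pullback_group_def)
lemma pullback_mult[simp]: "(x, y) \<otimes>\<^bsub>pullback_group G s t\<^esub> (x', y') = (x \<otimes>\<^bsub>G\<^esub> x', y \<otimes>\<^bsub>G\<^esub> y')"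
  by (simp add: pullback_group_def)

context xsq begin

abbreviation "sA \<equiv> (\<lambda>(l::'l, n::'n). n)"
abbreviation "sB \<equiv> (\<lambda>(m::'m, p::'p). p)"
abbreviation "tA \<equiv> (\<lambda>(l, n). lam' l \<otimes>\<^bsub>N\<^esub> n)"
abbreviation "tB \<equiv> (\<lambda>(m, p). mu m \<otimes>\<^bsub>P\<^esub> p)"
abbreviation "eA \<equiv> (\<lambda>n. (\<one>\<^bsub>L\<^esub>, n))"
abbreviation "eB \<equiv> (\<lambda>p. (\<one>\<^bsub>M\<^esub>, p))"
abbreviation "mA \<equiv> (\<lambda>((l', n'), (l, n)). (l' \<otimes>\<^bsub>L\<^esub> l, n))"
abbreviation "mB \<equiv> (\<lambda>((m', p'), (m, p)). (m' \<otimes>\<^bsub>M\<^esub> m, p))"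

lemma hom_s: "xmod_hom A1 B1 act1 \<alpha>1 N P actN nu sA sB"
  unfolding xmod_hom_def hom_def by auto

lemma hom_t: "xmod_hom A1 B1 act1 \<alpha>1 N P actN nu tA tB"
  unfolding xmod_hom_def hom_def
  by (auto simp: peiN muA nulam lam'E h_lam' aN_comp N.m_assoc P.m_assoc)

lemma hom_e: "xmod_hom N P actN nu A1 B1 act1 \<alpha>1 eA eB"
  unfolding xmod_hom_def hom_def by auto

lemma mA_mult:
  assumes "l1' \<in> carrier L" "l1 \<in> carrier L" "n1 \<in> carrier N" "l2' \<in> carrier L" "l2 \<in> carrier L" "n2 \<in> carrier N"
  shows "(l1' \<otimes>\<^bsub>L\<^esub> actL (nu (lam' l1 \<otimes>\<^bsub>N\<^esub> n1)) l2') \<otimes>\<^bsub>L\<^esub> (l1 \<otimes>\<^bsub>L\<^esub> actL (nu n1) l2) = (l1' \<otimes>\<^bsub>L\<^esub> l1) \<otimes>\<^bsub>L\<^esub> actL (nu n1) (l2' \<otimes>\<^bsub>L\<^esub> l2)"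
  using assms by (simp add: nulam aL_comp peiL L.m_assoc)

lemma mB_mult:
  assumes "m1' \<in> carrier M" "m1 \<in> carrier M" "p1 \<in> carrier P" "m2' \<in> carrier M" "m2 \<in> carrier M" "p2 \<in> carrier P"
  shows "(m1' \<otimes>\<^bsub>M\<^esub> actM (mu m1 \<otimes>\<^bsub>P\<^esub> p1) m2') \<otimes>\<^bsub>M\<^esub> (m1 \<otimes>\<^bsub>M\<^esub> actM p1 m2) = (m1' \<otimes>\<^bsub>M\<^esub> m1) \<otimes>\<^bsub>M\<^esub> actM p1 (m2' \<otimes>\<^bsub>M\<^esub> m2)"
  using assms by (simp add: aM_comp peiM M.m_assoc)

lemma mA_act1:
  assumes m': "m' \<in> carrier M" and m: "m \<in> carrier M" and p: "p \<in> carrier P"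
    and l': "l' \<in> carrier L" and l: "l \<in> carrier L" and n: "n \<in> carrier N"
  shows "actL (mu m') (actL (mu m \<otimes>\<^bsub>P\<^esub> p) l') \<otimes>\<^bsub>L\<^esub> h m' (actN (mu m \<otimes>\<^bsub>P\<^esub> p) (lam' l \<otimes>\<^bsub>N\<^esub> n)) \<otimes>\<^bsub>L\<^esub> (actL (mu m) (actL p l) \<otimes>\<^bsub>L\<^esub> h m (actN p n))
     = actL (mu (m' \<otimes>\<^bsub>M\<^esub> m)) (actL p (l' \<otimes>\<^bsub>L\<^esub> l)) \<otimes>\<^bsub>L\<^esub> h (m' \<otimes>\<^bsub>M\<^esub> m) (actN p n)"
proof -
  define x where "x = actN p n"
  define z where "z = actL (mu m) (actL p l) \<otimes>\<^bsub>L\<^esub> h m x"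
  have z: "z \<in> carrier L" and x: "x \<in> carrier N" using assms by (simp_all add: z_def x_def)
  have an: "actN (mu m \<otimes>\<^bsub>P\<^esub> p) (lam' l \<otimes>\<^bsub>N\<^esub> n) = lam' z \<otimes>\<^bsub>N\<^esub> x"
    using assms by (simp add: z_def x_def aN_comp lam'E h_lam' N.m_assoc)
  have hz: "h m' (lam' z \<otimes>\<^bsub>N\<^esub> x) = actL (mu m') z \<otimes>\<^bsub>L\<^esub> h m' x \<otimes>\<^bsub>L\<^esub> inv\<^bsub>L\<^esub> z"
    using assms z x by (simp add: h4b h3b nulam peiL L.m_assoc)
  have "actL (mu m') (actL (mu m \<otimes>\<^bsub>P\<^esub> p) l') \<otimes>\<^bsub>L\<^esub> h m' (actN (mu m \<otimes>\<^bsub>P\<^esub> p) (lam' l \<otimes>\<^bsub>N\<^esub> n)) \<otimes>\<^bsub>L\<^esub> (actL (mu m) (actL p l) \<otimes>\<^bsub>L\<^esub> h m (actN p n))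
     = actL (mu m') (actL (mu m \<otimes>\<^bsub>P\<^esub> p) l') \<otimes>\<^bsub>L\<^esub> (actL (mu m') z \<otimes>\<^bsub>L\<^esub> h m' x \<otimes>\<^bsub>L\<^esub> inv\<^bsub>L\<^esub> z) \<otimes>\<^bsub>L\<^esub> z"
    by (simp only: an hz x_def[symmetric] z_def[symmetric])
  also have "\<dots> = actL (mu m') (actL (mu m) (actL p l')) \<otimes>\<^bsub>L\<^esub> actL (mu m') z \<otimes>\<^bsub>L\<^esub> h m' x"
    using assms z x by (simp add: aL_comp L.m_assoc)
  also have "\<dots> = actL (mu (m' \<otimes>\<^bsub>M\<^esub> m)) (actL p (l' \<otimes>\<^bsub>L\<^esub> l)) \<otimes>\<^bsub>L\<^esub> h (m' \<otimes>\<^bsub>M\<^esub> m) (actN p n)"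
    using assms
    apply (simp add: z_def x_def aL_comp)
    apply (subst h4a)
    apply (simp_all add: L.m_assoc)
    done
  finally show ?thesis .
qed

lemma hom_m: "xmod_hom (pullback_group A1 sA tA) (pullback_group B1 sB tB) (pair_act act1) (pair_map \<alpha>1)
              A1 B1 act1 \<alpha>1 mA mB"
  unfolding xmod_hom_def
proof (intro conjI ballI)
  show "mA \<in> hom (pullback_group A1 sA tA) A1"
    unfolding hom_def
  proof (intro CollectI conjI ballI)
    show "mA \<in> carrier (pullback_group A1 sA tA) \<rightarrow> carrier A1" by auto
    fix a b assume "a \<in> carrier (pullback_group A1 sA tA)" "b \<in> carrier (pullback_group A1 sA tA)"
    then obtain l1' n1' l1 n1 l2' n2' l2 n2 where a: "a = ((l1', n1'), (l1, n1))" and b: "b = ((l2', n2'), (l2, n2))"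
      and c: "l1' \<in> carrier L" "l1 \<in> carrier L" "n1 \<in> carrier N" "l2' \<in> carrier L" "l2 \<in> carrier L" "n2 \<in> carrier N"
      and e: "n1' = lam' l1 \<otimes>\<^bsub>N\<^esub> n1" "n2' = lam' l2 \<otimes>\<^bsub>N\<^esub> n2"
      by (cases a, cases b) auto
    show "mA (a \<otimes>\<^bsub>pullback_group A1 sA tA\<^esub> b) = mA a \<otimes>\<^bsub>A1\<^esub> mA b"
      unfolding a b e using mA_mult[OF c] by simp
  qed
next
  show "mB \<in> hom (pullback_group B1 sB tB) B1"
    unfolding hom_def
  proof (intro CollectI conjI ballI)
    show "mB \<in> carrier (pullback_group B1 sB tB) \<rightarrow> carrier B1" by auto
    fix a b assume "a \<in> carrier (pullback_group B1 sB tB)" "b \<in> carrier (pullback_group B1 sB tB)"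
    then obtain m1' p1' m1 p1 m2' p2' m2 p2 where a: "a = ((m1', p1'), (m1, p1))" and b: "b = ((m2', p2'), (m2, p2))"
      and c: "m1' \<in> carrier M" "m1 \<in> carrier M" "p1 \<in> carrier P" "m2' \<in> carrier M" "m2 \<in> carrier M" "p2 \<in> carrier P"
      and e: "p1' = mu m1 \<otimes>\<^bsub>P\<^esub> p1" "p2' = mu m2 \<otimes>\<^bsub>P\<^esub> p2"
      by (cases a, cases b) auto
    show "mB (a \<otimes>\<^bsub>pullback_group B1 sB tB\<^esub> b) = mB a \<otimes>\<^bsub>B1\<^esub> mB b"
      unfolding a b e using mB_mult[OF c] by simp
  qed
next
  fix a assume "a \<in> carrier (pullback_group A1 sA tA)"
  then show "mB (pair_map \<alpha>1 a) = \<alpha>1 (mA a)" by (auto simp: pair_map_def)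
next
  fix b a assume "b \<in> carrier (pullback_group B1 sB tB)" "a \<in> carrier (pullback_group A1 sA tA)"
  then obtain m' p' m p l' n' l n where a: "a = ((l', n'), (l, n))" and b: "b = ((m', p'), (m, p))"
      and c: "m' \<in> carrier M" "m \<in> carrier M" "p \<in> carrier P" "l' \<in> carrier L" "l \<in> carrier L" "n \<in> carrier N"
      and e: "n' = lam' l \<otimes>\<^bsub>N\<^esub> n" "p' = mu m \<otimes>\<^bsub>P\<^esub> p"
      by (cases a, cases b) auto
  have "mA (pair_act act1 b a) = (actL (mu m') (actL (mu m \<otimes>\<^bsub>P\<^esub> p) l') \<otimes>\<^bsub>L\<^esub> h m' (actN (mu m \<otimes>\<^bsub>P\<^esub> p) (lam' l \<otimes>\<^bsub>N\<^esub> n)) \<otimes>\<^bsub>L\<^esub> (actL (mu m) (actL p l) \<otimes>\<^bsub>L\<^esub> h m (actN p n)), actN p n)"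
    unfolding a b e by (simp add: pair_act_def)
  also have "\<dots> = (actL (mu (m' \<otimes>\<^bsub>M\<^esub> m)) (actL p (l' \<otimes>\<^bsub>L\<^esub> l)) \<otimes>\<^bsub>L\<^esub> h (m' \<otimes>\<^bsub>M\<^esub> m) (actN p n), actN p n)"
    unfolding mA_act1[OF c] ..
  also have "\<dots> = act1 (mB b) (mA a)" unfolding a b by simp
  finally show "mA (pair_act act1 b a) = act1 (mB b) (mA a)" .
qed

lemma icat: "internal_cat_xmod A1 B1 act1 \<alpha>1 N P actN nu sA sB tA tB eA eB mA mB"
  unfolding internal_cat_xmod_def
  by (intro conjI xm1 xmN hom_s hom_t hom_e hom_m) (auto simp: N.m_assoc M.m_assoc L.m_assoc P.m_assoc)

end
theorem mainTheorem3:
  fixes L :: "('l, 'c1) monoid_scheme" and M :: "('m, 'c2) monoid_scheme"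
    and N :: "('n, 'c3) monoid_scheme" and P :: "('p, 'c4) monoid_scheme"
    and lam :: "'l \<Rightarrow> 'm" and lam' :: "'l \<Rightarrow> 'n" and mu :: "'m \<Rightarrow> 'p" and nu :: "'n \<Rightarrow> 'p"
    and actL :: "'p \<Rightarrow> 'l \<Rightarrow> 'l" and actM :: "'p \<Rightarrow> 'm \<Rightarrow> 'm" and actN :: "'p \<Rightarrow> 'n \<Rightarrow> 'n"
    and h :: "'m \<Rightarrow> 'n \<Rightarrow> 'l"
  assumes "crossed_square L M N P lam lam' mu nu actL actM actN h"
  defines "A1 \<equiv> semidirect L N (\<lambda>n l. actL (nu n) l)"
      and "B1 \<equiv> semidirect M P actM"
      and "act1 \<equiv> (\<lambda>(m, p) (l, n). (actL (mu m) (actL p l) \<otimes>\<^bsub>L\<^esub> h m (actN p n), actN p n))"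
      and "\<alpha>1 \<equiv> (\<lambda>(l, n). (lam l, nu n))"
      and "sA \<equiv> (\<lambda>(l, n). n)" and "sB \<equiv> (\<lambda>(m, p). p)"
      and "tA \<equiv> (\<lambda>(l, n). lam' l \<otimes>\<^bsub>N\<^esub> n)" and "tB \<equiv> (\<lambda>(m, p). mu m \<otimes>\<^bsub>P\<^esub> p)"
      and "eA \<equiv> (\<lambda>n. (\<one>\<^bsub>L\<^esub>, n))" and "eB \<equiv> (\<lambda>p. (\<one>\<^bsub>M\<^esub>, p))"
      and "mA \<equiv> (\<lambda>((l', n'), (l, n)). (l' \<otimes>\<^bsub>L\<^esub> l, n))"
      and "mB \<equiv> (\<lambda>((m', p'), (m, p)). (m' \<otimes>\<^bsub>M\<^esub> m, p))"
  shows "crossed_module A1 B1 act1 \<alpha>1 \<and> crossed_module N P actN nu \<and>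
         internal_cat_xmod A1 B1 act1 \<alpha>1 N P actN nu sA sB tA tB eA eB mA mB"
  proof -
  interpret xsq L M N P lam lam' mu nu actL actM actN h
    by (rule xsq.intro) (rule assms(1))
  show ?thesis
    unfolding A1_def B1_def act1_def \<alpha>1_def sA_def sB_def tA_def tB_def eA_def eB_def mA_def mB_def
    by (intro conjI xm1 xmN icat)
qed

end
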